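(* Let $T$ be a tree with $n$ vertices and matching number $\beta$. Then $$S_{k}(A(T))\leq \begin{cases} \sqrt{k(n-1)}, & \text{if } 1\leq k \leq \beta;\\ \sqrt{\beta (n-1)}, & \text{if } \beta< k \leq n-\beta;\\ \sqrt{(n-k)(n-1)}, & \text{if } n-\beta< k \leq n. \end{cases}$$
   Context: $A(T)$ is the adjacency matrix of $T$. For a real symmetric matrix $M$ with eigenvalues $\lambda_1(M)\geq\cdots\geq\lambda_n(M)$, $S_k(M)=\sum_{i=1}^k\lambda_i(M)$. The matching number is the maximum size of a matching. *)

theory Defs
  imports "HOL-Analysis.Analysis" "Jordan_Normal_Form.Char_Poly"
begin

definition simple_graph :: "nat \<Rightarrow> nat set set \<Rightarrow> bool" where
  "simple_graph n E \<longleftrightarrow> (\<forall>e\<in>E. \<exists>u v. u < n \<and> v < n \<and> u \<noteq> v \<and> e = {u, v})"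

definition graph_connected :: "nat \<Rightarrow> nat set set \<Rightarrow> bool" where
  "graph_connected n E \<longleftrightarrow>
     (\<forall>u<n. \<forall>v<n. (\<lambda>x y. {x, y} \<in> E)\<^sup>*\<^sup>* u v)"

definition is_tree :: "nat \<Rightarrow> nat set set \<Rightarrow> bool" where
  "is_tree n E \<longleftrightarrow> n \<ge> 1 \<and> simple_graph n E \<and> graph_connected n E \<and> card E = n - 1"

definition is_matching :: "nat set set \<Rightarrow> nat set set \<Rightarrow> bool" where
  "is_matching E M \<longleftrightarrow> M \<subseteq> E \<and> (\<forall>e\<in>M. \<forall>f\<in>M. e \<noteq> f \<longrightarrow> e \<inter> f = {})"

definition matching_number :: "nat set set \<Rightarrow> nat" where
  "matching_number E = Max (card ` {M. is_matching E M})"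

definition adj_matrix :: "nat \<Rightarrow> nat set set \<Rightarrow> real mat" where
  "adj_matrix n E = mat n n (\<lambda>(i, j). if {i, j} \<in> E then 1 else 0)"

text \<open>Eigenvalues (with multiplicity) of a real square matrix whose characteristic
  polynomial splits over the reals (e.g. a real symmetric matrix), listed in
  non-increasing order: lambda_1 >= ... >= lambda_n.\<close>
definition eigenvalues_desc :: "real mat \<Rightarrow> real list" where
  "eigenvalues_desc A = (SOME ls. length ls = dim_row A \<and> sorted_wrt (\<ge>) ls \<and>
      char_poly A = (\<Prod>l\<leftarrow>ls. [:- l, 1:]))"

definition S_k :: "nat \<Rightarrow> real mat \<Rightarrow> real" where
  "S_k k A = sum_list (take k (eigenvalues_desc A))"

end

theory Submission
  imports Defs "Jordan_Normal_Form.Schur_Decomposition"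
begin


lemma list_cs:
  fixes xs :: "real list"
  shows "(sum_list xs)^2 \<le> real (length xs) * sum_list (map (\<lambda>x. x^2) xs)"
proof -
  have "(sum_list xs)^2 = (\<Sum>i<length xs. xs!i)^2"
    by (simp add: sum_list_sum_nth atLeast0LessThan)
  also have "\<dots> \<le> (\<Sum>i<length xs. (xs!i)^2) * real (card {..<length xs})"
    by (rule sum_squared_le_sum_of_squares)
  also have "(\<Sum>i<length xs. (xs!i)^2) = sum_list (map (\<lambda>x. x^2) xs)"
    by (simp add: sum_list_sum_nth atLeast0LessThan)
  finally show ?thesis by (simp add: mult.commute)
qed

lemma sum_list_uminus: "sum_list (map uminus (xs::real list)) = - sum_list xs"
  by (induction xs) auto

lemma sum_list_le_pos:
  fixes xs :: "real list"
  shows "sum_list xs \<le> sum_list (filter (\<lambda>x. x > 0) xs)"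
  by (induction xs) auto

lemma sum_list_pos_nonneg:
  fixes xs :: "real list"
  shows "0 \<le> sum_list (filter (\<lambda>x. x > 0) xs)"
  by (induction xs) auto

lemma sumsq_mono_take:
  fixes xs :: "real list"
  shows "sum_list (map (\<lambda>x. x^2) (filter P (take k xs))) \<le> sum_list (map (\<lambda>x. x^2) (filter P xs))"
proof -
  have "xs = take k xs @ drop k xs" by simp
  then have "sum_list (map (\<lambda>x. x^2) (filter P xs)) =
     sum_list (map (\<lambda>x. x^2) (filter P (take k xs))) + sum_list (map (\<lambda>x. x^2) (filter P (drop k xs)))"
    by (metis filter_append map_append sum_list_append)
  moreover have "0 \<le> sum_list (map (\<lambda>x. x^2) (filter P (drop k xs)))"
    by (rule sum_list_nonneg) auto
  ultimately show ?thesis by linarith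
qed

lemma mset_split_signs: "filter_mset (\<lambda>x. x \<noteq> 0) (M::real multiset) = filter_mset (\<lambda>x. x > 0) M + filter_mset (\<lambda>x. x < 0) M"
  by (induction M) auto

lemma list_main:
  fixes ls :: "real list" and b :: nat and c :: real
  assumes sym: "mset (map uminus ls) = mset ls"
    and sq: "sum_list (map (\<lambda>x. x^2) ls) = 2*c"
    and nz: "length (filter (\<lambda>x. x \<noteq> 0) ls) \<le> 2*b"
  shows "sum_list (take k ls) \<le> sqrt (real (min k b) * c)"
proof -
  let ?M = "mset ls"
  have negpos: "filter_mset (\<lambda>x. x < 0) ?M = image_mset uminus (filter_mset (\<lambda>x. x > 0) ?M)"
  proof -
    have "filter_mset (\<lambda>x. x < 0) ?M = filter_mset (\<lambda>x. x < 0) (image_mset uminus ?M)"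
      using sym by simp
    also have "\<dots> = image_mset uminus (filter_mset (\<lambda>x. x > 0) ?M)"
      by (simp add: filter_mset_image_mset)
    finally show ?thesis .
  qed
  define p where "p = size (filter_mset (\<lambda>x. x > 0) ?M)"
  have "size (filter_mset (\<lambda>x. x < 0) ?M) = p" unfolding p_def negpos by simp
  moreover have "filter_mset (\<lambda>x. x \<noteq> 0) ?M = filter_mset (\<lambda>x. x > 0) ?M + filter_mset (\<lambda>x. x < 0) ?M"
    using mset_split_signs by blast
  moreover have "length (filter (\<lambda>x. x \<noteq> 0) ls) = size (filter_mset (\<lambda>x. x \<noteq> 0) ?M)"
    by (metis mset_filter size_mset)
  ultimately have "2*p \<le> 2*b" using nz p_def by simp
  hence pb: "p \<le> b" by simp
  have sqpos: "sum_list (map (\<lambda>x. x^2) (filter (\<lambda>x. x > 0) ls)) = c"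
  proof -
    let ?f = "\<lambda>x::real. x^2"
    have e1: "sum_list (map ?f (filter (\<lambda>x. x > 0) ls)) = sum_mset (image_mset ?f (filter_mset (\<lambda>x. x > 0) ?M))"
      by (metis mset_filter mset_map sum_mset_sum_list)
    have e2: "sum_list (map ?f (filter (\<lambda>x. x < 0) ls)) = sum_mset (image_mset ?f (filter_mset (\<lambda>x. x < 0) ?M))"
      by (metis mset_filter mset_map sum_mset_sum_list)
    have e3: "sum_mset (image_mset ?f (filter_mset (\<lambda>x. x < 0) ?M)) = sum_mset (image_mset ?f (filter_mset (\<lambda>x. x > 0) ?M))"
      unfolding negpos by (simp add: multiset.map_comp comp_def)
    have split: "\<And>xs::real list. sum_list (map ?f xs) = sum_list (map ?f (filter (\<lambda>x. x > 0) xs)) + sum_list (map ?f (filter (\<lambda>x. x < 0) xs))"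
      subgoal for xs by (induction xs) auto
      done
    show ?thesis using split[of ls] sq e1 e2 e3 by linarith
  qed
  let ?t = "filter (\<lambda>x. x > 0) (take k ls)"
  have lt: "length ?t \<le> min k p"
  proof -
    have "length ?t \<le> length (take k ls)" by (rule length_filter_le)
    hence a: "length ?t \<le> k" by simp
    have "length ?t = size (filter_mset (\<lambda>x. x > 0) (mset (take k ls)))"
      by (metis mset_filter size_mset)
    also have "\<dots> \<le> p" unfolding p_def
      by (intro size_mset_mono multiset_filter_mono) (metis mset_append append_take_drop_id mset_subset_eq_add_left)
    finally show ?thesis using a by simp
  qed
  have "sum_list (take k ls) \<le> sum_list ?t" by (rule sum_list_le_pos)
  also have "sum_list ?t \<le> sqrt (real (min k b) * c)"
  proof (rule real_le_rsqrt)
    have "(sum_list ?t)^2 \<le> real (length ?t) * sum_list (map (\<lambda>x. x^2) ?t)" by (rule list_cs)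
    also have "\<dots> \<le> real (min k b) * c"
    proof (rule mult_mono)
      show "real (length ?t) \<le> real (min k b)" using lt pb by simp
      show "sum_list (map (\<lambda>x. x^2) ?t) \<le> c" using sumsq_mono_take[of "\<lambda>x. x > 0" k ls] sqpos by simp
      show "0 \<le> real (min k b)" by simp
      show "0 \<le> sum_list (map (\<lambda>x. x^2) ?t)" by (rule sum_list_nonneg) auto
    qed
    finally show "(sum_list ?t)^2 \<le> real (min k b) * c" .
  qed
  finally show ?thesis .
qed

lemma list_sym_take:
  fixes ls :: "real list"
  assumes sorted: "sorted_wrt (\<ge>) ls"
    and sym: "mset (map uminus ls) = mset ls"
    and k: "k \<le> length ls"
  shows "sum_list (take k ls) = sum_list (take (length ls - k) ls)"
proof -
  have s1: "sorted (rev ls)" using sorted by (simp add: sorted_wrt_rev)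
  have s2: "sorted (map uminus ls)" using sorted by (simp add: sorted_wrt_map)
  have "sort (rev ls) = rev ls" using s1 by (simp add: sorted_sort_id)
  moreover have "sort (rev ls) = map uminus ls"
    by (rule properties_for_sort) (use sym s2 in auto)
  ultimately have r: "rev ls = map uminus ls" by simp
  have "sum_list (drop k ls) = sum_list (drop k (rev (map uminus ls)))"
    using r by (metis rev_rev_ident)
  also have "\<dots> = sum_list (rev (take (length ls - k) (map uminus ls)))"
    by (simp add: drop_rev)
  also have "\<dots> = - sum_list (take (length ls - k) ls)"
    by (simp add: take_map sum_list_uminus)
  finally have d: "sum_list (drop k ls) = - sum_list (take (length ls - k) ls)" .
  have "sum_list ls = sum_list (map uminus ls)"
    by (metis sym sum_mset_sum_list)
  hence z: "sum_list ls = 0" by (simp add: sum_list_uminus)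
  have "sum_list ls = sum_list (take k ls) + sum_list (drop k ls)"
    by (metis append_take_drop_id sum_list_append)
  then show ?thesis using d z by linarith
qed



definition gtree :: "nat set \<Rightarrow> nat set set \<Rightarrow> bool" where
  "gtree V E \<longleftrightarrow> finite V \<and> V \<noteq> {} \<and> (\<forall>e\<in>E. \<exists>a b. a \<in> V \<and> b \<in> V \<and> a \<noteq> b \<and> e = {a, b})
     \<and> (\<forall>u\<in>V. \<forall>w\<in>V. (\<lambda>x y. {x, y} \<in> E)\<^sup>*\<^sup>* u w) \<and> card E = card V - 1"

lemma conn_remove_leaf:
  assumes e0: "e0 = {v, u}" "u \<noteq> v"
    and leaf: "\<And>e. e \<in> E \<Longrightarrow> v \<in> e \<Longrightarrow> e = e0"
    and simple: "\<And>a. {a} \<notin> E"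
    and r: "(\<lambda>x y. {x, y} \<in> E)\<^sup>*\<^sup>* x y" and xv: "x \<noteq> v"
  shows "(y \<noteq> v \<longrightarrow> (\<lambda>x y. {x, y} \<in> E - {e0})\<^sup>*\<^sup>* x y) \<and> (y = v \<longrightarrow> (\<lambda>x y. {x, y} \<in> E - {e0})\<^sup>*\<^sup>* x u)"
  using r
proof (induction rule: rtranclp_induct)
  case base
  then show ?case using xv by auto
next
  case (step y z)
  show ?case
  proof (cases "y = v")
    case True
    show ?thesis
    proof (cases "z = v")
      case True
      with \<open>y = v\<close> step(2) simple show ?thesis by auto
    next
      case False
      have "{y, z} = e0" using leaf step(2) \<open>y = v\<close> by auto
      hence "z = u" using e0 False \<open>y = v\<close> by (auto simp: doubleton_eq_iff)
      then show ?thesis using step(3) \<open>y = v\<close> False by auto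
    qed
  next
    case False
    show ?thesis
    proof (cases "z = v")
      case True
      have "{y, z} = e0" using leaf step(2) True by auto
      hence "y = u" using e0 False True by (auto simp: doubleton_eq_iff)
      then show ?thesis using step(3) False True by auto
    next
      case zv: False
      have "{y, z} \<noteq> e0" using e0 False zv by (auto simp: doubleton_eq_iff)
      hence "{y, z} \<in> E - {e0}" using step(2) by auto
      then show ?thesis using step(3) False zv
        by (metis (mono_tags, lifting) rtranclp.rtrancl_into_rtrancl)
    qed
  qed
qed

lemma degree_sum:
  assumes fin: "finite V" and fe: "finite E"
    and edges: "\<forall>e\<in>E. \<exists>a b. a \<in> V \<and> b \<in> V \<and> a \<noteq> b \<and> e = {a, b}"
  shows "(\<Sum>v\<in>V. card {e\<in>E. v \<in> e}) = 2 * card E"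
proof -
  have "(\<Sum>v\<in>V. card {e\<in>E. v \<in> e}) = (\<Sum>v\<in>V. \<Sum>e\<in>E. if v \<in> e then 1 else 0)"
  proof (rule sum.cong[OF refl])
    fix v
    have "card {e\<in>E. v \<in> e} = (\<Sum>e\<in>{e\<in>E. v \<in> e}. 1)" by simp
    also have "\<dots> = (\<Sum>e\<in>E. if v \<in> e then 1 else 0)" by (rule sum.inter_filter[OF fe])
    finally show "card {e\<in>E. v \<in> e} = (\<Sum>e\<in>E. if v \<in> e then 1 else 0)" .
  qed
  also have "\<dots> = (\<Sum>e\<in>E. \<Sum>v\<in>V. if v \<in> e then 1 else 0)"
    by (rule sum.swap)
  also have "\<dots> = (\<Sum>e\<in>E. 2)"
  proof (rule sum.cong)
    fix e assume "e \<in> E"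
    then obtain a b where ab: "a \<in> V" "b \<in> V" "a \<noteq> b" "e = {a, b}" using edges by blast
    have "(\<Sum>v\<in>V. if v \<in> e then 1 else (0::nat)) = (\<Sum>v\<in>{v\<in>V. v \<in> e}. 1)"
      by (rule sum.inter_filter[OF fin, symmetric])
    also have "{v\<in>V. v \<in> e} = {a, b}" using ab by auto
    finally show "(\<Sum>v\<in>V. if v \<in> e then 1 else (0::nat)) = 2" using ab by simp
  qed simp
  finally show ?thesis by (simp add: mult.commute)
qed

lemma gtree_coloring:
  assumes "gtree V E"
  shows "\<exists>c::nat\<Rightarrow>bool. \<forall>a b. {a, b} \<in> E \<longrightarrow> c a \<noteq> c b"
  using assms
proof (induction "card V" arbitrary: V E rule: less_induct)
  case less
  note t = less.prems[unfolded gtree_def]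
  have finV: "finite V" using t by (rule conjunct1)
  have neV: "V \<noteq> {}" using t[THEN conjunct2] by (rule conjunct1)
  have edges: "\<forall>e\<in>E. \<exists>a b. a \<in> V \<and> b \<in> V \<and> a \<noteq> b \<and> e = {a, b}" using t[THEN conjunct2, THEN conjunct2] by (rule conjunct1)
  have conn: "\<forall>u\<in>V. \<forall>w\<in>V. (\<lambda>x y. {x, y} \<in> E)\<^sup>*\<^sup>* u w" using t[THEN conjunct2, THEN conjunct2, THEN conjunct2] by (rule conjunct1)
  have cE: "card E = card V - 1" using t[THEN conjunct2, THEN conjunct2, THEN conjunct2] by (rule conjunct2)
  have EPow: "E \<subseteq> Pow V"
  proof
    fix e assume "e \<in> E"
    then obtain a b where "a \<in> V" "b \<in> V" "e = {a, b}" using edges by blast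
    then show "e \<in> Pow V" by simp
  qed
  have finE: "finite E" using finite_subset[OF EPow] finV by simp
  have simple: "\<And>a. {a} \<notin> E"
  proof
    fix a assume "{a} \<in> E"
    then obtain x y where xy: "x \<noteq> y" "{a} = {x, y}" using edges by blast
    have "x \<in> {a}" "y \<in> {a}" using xy(2) by simp_all
    then show False using xy(1) by simp
  qed
  show ?case
  proof (cases "card V = 1")
    case True
    hence "E = {}" using cE finE by simp
    then show ?thesis by auto
  next
    case False
    have "card V \<noteq> 0" using neV finV by simp
    hence c2: "card V \<ge> 2" using False by linarith
    have "\<exists>v\<in>V. card {e\<in>E. v \<in> e} \<le> 1"
    proof (rule ccontr)
      assume "\<not> ?thesis"
      hence "\<forall>v\<in>V. 2 \<le> card {e\<in>E. v \<in> e}" by auto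
      hence "(\<Sum>v\<in>V. 2) \<le> (\<Sum>v\<in>V. card {e\<in>E. v \<in> e})" by (intro sum_mono) auto
      hence "2 * card V \<le> 2 * card E" using degree_sum[OF finV finE edges] by simp
      then show False using cE c2 by simp
    qed
    then obtain v where vV: "v \<in> V" and dv: "card {e\<in>E. v \<in> e} \<le> 1" by blast
    obtain w where wV: "w \<in> V" and wv: "w \<noteq> v"
    proof -
      have "V - {v} \<noteq> {}"
      proof
        assume "V - {v} = {}"
        hence "V = {v}" using vV by blast
        thus False using c2 by simp
      qed
      then show ?thesis using that by blast
    qed
    have path: "(\<lambda>x y. {x, y} \<in> E)\<^sup>*\<^sup>* v w" using conn vV wV by simp
    obtain y where "{v, y} \<in> E"
    proof (rule converse_rtranclpE[OF path])
      assume "v = w" then show ?thesis using wv by simp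
    next
      fix y assume "{v, y} \<in> E" then show ?thesis using that by simp
    qed
    then obtain e0 where e0E: "e0 \<in> E" and ve0: "v \<in> e0" and e0: "e0 = {v, y}" by blast
    have dset: "{e\<in>E. v \<in> e} = {e0}"
    proof -
      have "e0 \<in> {e\<in>E. v \<in> e}" using e0E ve0 by simp
      moreover have "finite {e\<in>E. v \<in> e}" using finE by simp
      ultimately have "card {e\<in>E. v \<in> e} > 0" by (auto simp: card_gt_0_iff)
      hence "card {e\<in>E. v \<in> e} = 1" using dv by linarith
      then obtain x where "{e\<in>E. v \<in> e} = {x}" by (rule card_1_singletonE)
      then show ?thesis using \<open>e0 \<in> {e\<in>E. v \<in> e}\<close> by auto
    qed
    have leaf: "\<And>e. e \<in> E \<Longrightarrow> v \<in> e \<Longrightarrow> e = e0" using dset by blast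
    obtain u where e0u: "e0 = {v, u}" and uv: "u \<noteq> v" and uV: "u \<in> V"
    proof -
      obtain a b where ab: "a \<in> V" "b \<in> V" "a \<noteq> b" "e0 = {a, b}" using edges e0E by blast
      have "v = a \<or> v = b" using ve0 ab(4) by simp
      then show ?thesis
      proof
        assume "v = a" then show ?thesis using that[of b] ab by simp
      next
        assume "v = b" then show ?thesis using that[of a] ab by (simp add: insert_commute)
      qed
    qed
    define V' where "V' = V - {v}"
    define E' where "E' = E - {e0}"
    have cV': "card V' = card V - 1" unfolding V'_def using vV finV by simp
    have gt: "gtree V' E'"
      unfolding gtree_def
    proof (intro conjI)
      show "finite V'" unfolding V'_def using finV by simp
      show "V' \<noteq> {}" using cV' c2 by (intro notI) simp
      show "\<forall>e\<in>E'. \<exists>a b. a \<in> V' \<and> b \<in> V' \<and> a \<noteq> b \<and> e = {a, b}"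
      proof
        fix e assume "e \<in> E'"
        hence eE: "e \<in> E" and ne: "e \<noteq> e0" unfolding E'_def by auto
        hence "v \<notin> e" using leaf by blast
        obtain a b where ab: "a \<in> V" "b \<in> V" "a \<noteq> b" "e = {a, b}" using edges eE by blast
        have "a \<noteq> v" "b \<noteq> v" using ab(4) \<open>v \<notin> e\<close> by auto
        hence "a \<in> V'" "b \<in> V'" using ab unfolding V'_def by auto
        then show "\<exists>a b. a \<in> V' \<and> b \<in> V' \<and> a \<noteq> b \<and> e = {a, b}"
          using ab(3,4) by blast
      qed
      show "\<forall>a\<in>V'. \<forall>b\<in>V'. (\<lambda>x y. {x, y} \<in> E')\<^sup>*\<^sup>* a b"
      proof (intro ballI)
        fix a b assume "a \<in> V'" "b \<in> V'"
        hence "a \<in> V" "b \<in> V" "a \<noteq> v" "b \<noteq> v" unfolding V'_def by auto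
        have r: "(\<lambda>x y. {x, y} \<in> E)\<^sup>*\<^sup>* a b" using conn \<open>a \<in> V\<close> \<open>b \<in> V\<close> by blast
        have "(\<lambda>x y. {x, y} \<in> E - {e0})\<^sup>*\<^sup>* a b"
          using conn_remove_leaf[OF e0u uv leaf simple r \<open>a \<noteq> v\<close>] \<open>b \<noteq> v\<close> by simp
        then show "(\<lambda>x y. {x, y} \<in> E')\<^sup>*\<^sup>* a b" unfolding E'_def .
      qed
      show "card E' = card V' - 1" unfolding E'_def using cE cV' e0E finE by simp
    qed
    have "card V' < card V" using cV' c2 by simp
    from less.hyps[OF this gt] obtain c' :: "nat \<Rightarrow> bool" where c': "\<forall>a b. {a, b} \<in> E' \<longrightarrow> c' a \<noteq> c' b" by blast
    define c where "c x = (if x = v then \<not> c' u else c' x)" for x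
    have "\<forall>a b. {a, b} \<in> E \<longrightarrow> c a \<noteq> c b"
    proof (intro allI impI)
      fix a b assume ab: "{a, b} \<in> E"
      show "c a \<noteq> c b"
      proof (cases "{a, b} = e0")
        case True
        then show ?thesis using e0u uv unfolding c_def by (auto simp: doubleton_eq_iff)
      next
        case False
        hence "a \<noteq> v" "b \<noteq> v" using leaf ab by auto
        moreover have "{a, b} \<in> E'" using ab False unfolding E'_def by simp
        ultimately show ?thesis using c'[rule_format, OF \<open>{a, b} \<in> E'\<close>] unfolding c_def by simp
      qed
    qed
    then show ?thesis by blast
  qed
qed

lemma tree_coloring:
  assumes "is_tree n E"
  shows "\<exists>c::nat\<Rightarrow>bool. \<forall>a b. {a, b} \<in> E \<longrightarrow> c a \<noteq> c b"
proof (rule gtree_coloring)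
  have a: "n \<ge> 1" "simple_graph n E" "graph_connected n E" "card E = n - 1"
    using assms unfolding is_tree_def by blast+
  show "gtree {0..<n} E" unfolding gtree_def
  proof (intro conjI)
    show "finite {0..<n}" by simp
    show "{0..<n} \<noteq> {}" using a(1) by simp
    show "\<forall>e\<in>E. \<exists>a b. a \<in> {0..<n} \<and> b \<in> {0..<n} \<and> a \<noteq> b \<and> e = {a, b}"
      using a(2) unfolding simple_graph_def by (metis atLeastLessThan_iff zero_le)
    show "\<forall>u\<in>{0..<n}. \<forall>w\<in>{0..<n}. (\<lambda>x y. {x, y} \<in> E)\<^sup>*\<^sup>* u w"
      using a(3) unfolding graph_connected_def by simp
    show "card E = card {0..<n} - 1" using a(4) by simp
  qed
qed



interpretation rc_poly_hom: map_poly_inj_idom_hom "of_real :: real \<Rightarrow> complex" ..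

lemma real_eigen_sym:
  fixes A :: "real mat" and a :: complex
  assumes A: "A \<in> carrier_mat n n" and sym: "\<And>i j. i < n \<Longrightarrow> j < n \<Longrightarrow> A $$ (i, j) = A $$ (j, i)"
    and ev: "eigenvalue (map_mat complex_of_real A) a"
  shows "Im a = 0"
proof -
  let ?C = "map_mat complex_of_real A"
  have C: "?C \<in> carrier_mat n n" using A by simp
  obtain v where v: "v \<in> carrier_vec n" "v \<noteq> 0\<^sub>v n" "?C *\<^sub>v v = a \<cdot>\<^sub>v v"
    using ev C unfolding eigenvalue_def eigenvector_def by auto
  have Cv: "(\<Sum>j<n. complex_of_real (A $$ (i, j)) * v $ j) = a * v $ i" if i: "i < n" for i
  proof -
    have "(?C *\<^sub>v v) $ i = (\<Sum>j<n. complex_of_real (A $$ (i, j)) * v $ j)"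
      using i A v(1) by (simp add: scalar_prod_def atLeast0LessThan)
    moreover have "(?C *\<^sub>v v) $ i = a * v $ i" using v(3) i v(1) by simp
    ultimately show ?thesis by simp
  qed
  define S where "S = (\<Sum>i<n. cnj (v $ i) * v $ i)"
  define Q where "Q = (\<Sum>i<n. cnj (v $ i) * (\<Sum>j<n. complex_of_real (A $$ (i, j)) * v $ j))"
  have "Q = (\<Sum>i<n. cnj (v $ i) * (a * v $ i))" unfolding Q_def by (rule sum.cong) (simp_all add: Cv)
  also have "\<dots> = a * S" unfolding S_def sum_distrib_left by (simp add: mult.left_commute)
  finally have Q1: "Q = a * S" .
  have "cnj Q = (\<Sum>i<n. \<Sum>j<n. v $ i * complex_of_real (A $$ (i, j)) * cnj (v $ j))"
    unfolding Q_def cnj_sum by (simp add: sum_distrib_left mult.assoc)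
  also have "\<dots> = (\<Sum>j<n. \<Sum>i<n. v $ i * complex_of_real (A $$ (i, j)) * cnj (v $ j))"
    by (rule sum.swap)
  also have "\<dots> = Q" unfolding Q_def sum_distrib_left
    by (intro sum.cong refl) (simp add: sym mult.commute mult.left_commute)
  finally have Q2: "cnj Q = Q" .
  have Sreal: "S = complex_of_real (\<Sum>i<n. (cmod (v $ i))^2)"
    unfolding S_def of_real_sum by (intro sum.cong refl) (metis complex_norm_square mult.commute)
  have "S \<noteq> 0"
  proof
    assume "S = 0"
    hence "(\<Sum>i<n. (cmod (v $ i))^2) = 0" using Sreal by (metis of_real_eq_0_iff)
    hence "\<forall>i\<in>{..<n}. (cmod (v $ i))^2 = 0" by (subst (asm) sum_nonneg_eq_0_iff) auto
    hence "v = 0\<^sub>v n" using v(1) by (intro eq_vecI) auto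
    thus False using v(2) by simp
  qed
  have "cnj S = S" unfolding Sreal by simp
  hence "cnj a * S = a * S" using Q1 Q2 by (metis complex_cnj_mult)
  hence "cnj a = a" using \<open>S \<noteq> 0\<close> by simp
  thus "Im a = 0" by (metis Reals_cnj_iff complex_is_Real_iff)
qed

lemma real_sym_split:
  fixes A :: "real mat"
  assumes A: "A \<in> carrier_mat n n" and sym: "\<And>i j. i < n \<Longrightarrow> j < n \<Longrightarrow> A $$ (i, j) = A $$ (j, i)"
  shows "\<exists>ls. char_poly A = (\<Prod>l\<leftarrow>ls. [:- l, 1:])"
proof -
  let ?C = "map_mat complex_of_real A"
  have C: "?C \<in> carrier_mat n n" using A by simp
  obtain as where cas: "char_poly ?C = (\<Prod>a\<leftarrow>as. [:- a, 1:])" using char_poly_factorized[OF C] by blast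
  have re: "Im a = 0" if a: "a \<in> set as" for a
  proof (rule real_eigen_sym[OF A sym])
    have "poly (char_poly ?C) a = 0" unfolding cas by (rule linear_poly_root[OF a])
    then show "eigenvalue ?C a" using eigenvalue_root_char_poly[OF C] by simp
  qed
  define ls where "ls = map Re as"
  have as: "as = map complex_of_real ls"
    unfolding ls_def by (rule nth_equalityI) (auto simp: re complex_eq_iff)
  have cc: "char_poly ?C = map_poly complex_of_real (char_poly A)"
    by (rule of_real_hom.char_poly_hom[OF A])
  have "map_poly complex_of_real (char_poly A) = (\<Prod>l\<leftarrow>ls. [:- complex_of_real l, 1:])"
    using cc cas as by (simp add: comp_def)
  also have "\<dots> = map_poly complex_of_real (\<Prod>l\<leftarrow>ls. [:- l, 1:])"
    by (simp add: rc_poly_hom.hom_prod_list comp_def)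
  finally have "char_poly A = (\<Prod>l\<leftarrow>ls. [:- l, 1:])" by simp
  then show ?thesis by blast
qed



lemma prod_linear_mset:
  fixes xs ys :: "real list"
  assumes "(\<Prod>l\<leftarrow>xs. [:- l, 1:]) = (\<Prod>l\<leftarrow>ys. [:- l, 1:])"
  shows "mset xs = mset ys"
  using assms
proof (induction xs arbitrary: ys)
  case Nil
  have "degree (\<Prod>l\<leftarrow>ys. [:- l, 1:]) = length ys" by (rule degree_linear_factors)
  moreover have "degree (\<Prod>l\<leftarrow>ys. [:- l, 1:]) = 0" unfolding Nil.prems[symmetric] by simp
  ultimately show ?case by simp
next
  case (Cons x xs)
  have "poly (\<Prod>l\<leftarrow>x # xs. [:- l, 1:]) x = 0" by (rule linear_poly_root) simp
  hence "poly (\<Prod>l\<leftarrow>ys. [:- l, 1:]) x = 0" unfolding Cons.prems .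
  then obtain q where "q \<in> set (map (\<lambda>l. [:- l, 1:]) ys)" "poly q x = 0"
    unfolding poly_prod_list_zero_iff by blast
  then obtain l where "l \<in> set ys" "poly [:- l, 1:] x = 0" by auto
  hence xy: "x \<in> set ys" by simp
  let ?ys = "remove1 x ys"
  have my: "mset ys = add_mset x (mset ?ys)" using xy by simp
  have pm: "\<And>zs. (\<Prod>l\<leftarrow>zs. [:- l, 1:]) = prod_mset (image_mset (\<lambda>l. [:- l, 1:]) (mset zs))"
    by (metis mset_map prod_mset_prod_list)
  have "[:- x, 1:] * (\<Prod>l\<leftarrow>xs. [:- l, 1:]) = (\<Prod>l\<leftarrow>x # xs. [:- l, 1:])"
    by (simp only: list.map prod_list.Cons)
  also have "\<dots> = (\<Prod>l\<leftarrow>ys. [:- l, 1:])" by (rule Cons.prems)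
  also have "\<dots> = prod_mset (image_mset (\<lambda>l. [:- l, 1:]) (add_mset x (mset ?ys)))"
    by (simp only: pm[of ys] my)
  also have "\<dots> = [:- x, 1:] * (\<Prod>l\<leftarrow>?ys. [:- l, 1:])"
    by (simp only: pm[of ?ys] image_mset_add_mset prod_mset.add_mset)
  finally have eq: "[:- x, 1:] * (\<Prod>l\<leftarrow>xs. [:- l, 1:]) = [:- x, 1:] * (\<Prod>l\<leftarrow>?ys. [:- l, 1:])" .
  have nz: "[:- x, 1:] \<noteq> (0::real poly)" by simp
  have "(\<Prod>l\<leftarrow>xs. [:- l, 1:]) = (\<Prod>l\<leftarrow>?ys. [:- l, 1:])"
    by (rule iffD1[OF mult_left_cancel[OF nz] eq])
  from Cons.IH[OF this] have ih: "mset xs = mset ?ys" .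
  show ?case unfolding my by (simp only: mset.simps ih)
qed

definition mtr :: "'a::comm_ring_1 mat \<Rightarrow> 'a" where
  "mtr M = (\<Sum>i<dim_row M. M $$ (i, i))"

lemma mult_diag_entry:
  assumes X: "X \<in> carrier_mat n n" and Y: "Y \<in> carrier_mat n n" and i: "i < n"
  shows "(X * Y) $$ (i, i) = (\<Sum>j<n. X $$ (i, j) * Y $$ (j, i))"
  using X Y i by (simp add: scalar_prod_def atLeast0LessThan)

lemma mtr_comm:
  fixes X Y :: "'a::comm_ring_1 mat"
  assumes X: "X \<in> carrier_mat n n" and Y: "Y \<in> carrier_mat n n"
  shows "mtr (X * Y) = mtr (Y * X)"
proof -
  have "mtr (X * Y) = (\<Sum>i<n. \<Sum>j<n. X $$ (i, j) * Y $$ (j, i))"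
  proof -
    have "mtr (X * Y) = (\<Sum>i<n. (X * Y) $$ (i, i))" unfolding mtr_def using X by simp
    also have "\<dots> = (\<Sum>i<n. \<Sum>j<n. X $$ (i, j) * Y $$ (j, i))"
      by (intro sum.cong refl, rule mult_diag_entry[OF X Y]) simp
    finally show ?thesis .
  qed
  also have "\<dots> = (\<Sum>j<n. \<Sum>i<n. X $$ (i, j) * Y $$ (j, i))" by (rule sum.swap)
  also have "\<dots> = mtr (Y * X)"
  proof -
    have "mtr (Y * X) = (\<Sum>i<n. (Y * X) $$ (i, i))" unfolding mtr_def using Y by simp
    also have "\<dots> = (\<Sum>j<n. \<Sum>i<n. Y $$ (j, i) * X $$ (i, j))"
      by (intro sum.cong refl, rule mult_diag_entry[OF Y X]) simp
    finally show ?thesis by (simp add: mult.commute)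
  qed
  finally show ?thesis .
qed

lemma mtr_similar_sq:
  fixes A B P Q :: "'a::comm_ring_1 mat"
  assumes sim: "similar_mat_wit A B P Q" and A: "A \<in> carrier_mat n n"
  shows "mtr (A * A) = mtr (B * B)"
proof -
  have dA: "dim_row A = n" using A by simp
  have B: "B \<in> carrier_mat n n" and P: "P \<in> carrier_mat n n" and Q: "Q \<in> carrier_mat n n"
    and QP: "Q * P = 1\<^sub>m n" and AE: "A = P * B * Q"
    using sim unfolding similar_mat_wit_def Let_def dA by auto
  have "A * A = P * B * Q * (P * B * Q)" using AE by simp
  also have "\<dots> = P * (B * (Q * P) * B) * Q"
    using B P Q by (simp add: assoc_mult_mat[of _ n n _ n _ n])
  also have "\<dots> = P * ((B * B) * Q)" using B P Q QP by (simp add: assoc_mult_mat[of _ n n _ n _ n])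
  finally have AA: "A * A = P * ((B * B) * Q)" .
  have "mtr (A * A) = mtr (((B * B) * Q) * P)" unfolding AA
    by (rule mtr_comm[OF P]) (use B Q in auto)
  also have "((B * B) * Q) * P = B * B" using B P Q QP by (simp add: assoc_mult_mat[of _ n n _ n _ n])
  finally show ?thesis .
qed

lemma mtr_upper_sq:
  fixes B :: "'a::comm_ring_1 mat"
  assumes B: "B \<in> carrier_mat n n" and ut: "upper_triangular B"
  shows "mtr (B * B) = sum_list (map (\<lambda>x. x^2) (diag_mat B))"
proof -
  have "mtr (B * B) = (\<Sum>i<n. \<Sum>j<n. B $$ (i, j) * B $$ (j, i))"
  proof -
    have "mtr (B * B) = (\<Sum>i<n. (B * B) $$ (i, i))" unfolding mtr_def using B by simp
    also have "\<dots> = (\<Sum>i<n. \<Sum>j<n. B $$ (i, j) * B $$ (j, i))"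
      by (intro sum.cong refl, rule mult_diag_entry[OF B B]) simp
    finally show ?thesis .
  qed
  also have "\<dots> = (\<Sum>i<n. (B $$ (i, i))^2)"
  proof (rule sum.cong[OF refl])
    fix i assume i: "i \<in> {..<n}"
    have "(\<Sum>j<n. B $$ (i, j) * B $$ (j, i)) = (\<Sum>j<n. if j = i then (B $$ (i, i))^2 else 0)"
    proof (rule sum.cong[OF refl])
      fix j assume j: "j \<in> {..<n}"
      show "B $$ (i, j) * B $$ (j, i) = (if j = i then (B $$ (i, i))^2 else 0)"
      proof (cases "j < i")
        case True
        then show ?thesis using ut i B by (auto simp: upper_triangular_def)
      next
        case False
        show ?thesis
        proof (cases "j = i")
          case True then show ?thesis by (simp add: power2_eq_square)
        next
          case ne: False
          hence "i < j" using False by simp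
          then show ?thesis using ut j B ne by (auto simp: upper_triangular_def)
        qed
      qed
    qed
    also have "\<dots> = (B $$ (i, i))^2" using i by simp
    finally show "(\<Sum>j<n. B $$ (i, j) * B $$ (j, i)) = (B $$ (i, i))^2" .
  qed
  also have "\<dots> = sum_list (map (\<lambda>x. x^2) (diag_mat B))"
    unfolding diag_mat_def using B by (simp add: sum_list_sum_nth atLeast0LessThan)
  finally show ?thesis .
qed

lemma diag_left_entry:
  fixes M :: "'a::comm_ring_1 mat"
  assumes M: "M \<in> carrier_mat n m" and i: "i < n" and j: "j < m"
  shows "(mat n n (\<lambda>(i, j). if i = j then d i else 0) * M) $$ (i, j) = d i * M $$ (i, j)"
proof -
  have "(mat n n (\<lambda>(i, j). if i = j then d i else 0) * M) $$ (i, j) =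
    (\<Sum>k<n. (if i = k then d i else 0) * M $$ (k, j))"
    using M i j by (simp add: scalar_prod_def atLeast0LessThan)
  also have "\<dots> = (\<Sum>k<n. if k = i then d i * M $$ (i, j) else 0)"
    by (rule sum.cong) auto
  also have "\<dots> = d i * M $$ (i, j)" using i by simp
  finally show ?thesis .
qed

lemma diag_right_entry:
  fixes M :: "'a::comm_ring_1 mat"
  assumes M: "M \<in> carrier_mat m n" and i: "i < m" and j: "j < n"
  shows "(M * mat n n (\<lambda>(i, j). if i = j then d i else 0)) $$ (i, j) = M $$ (i, j) * d j"
proof -
  have "(M * mat n n (\<lambda>(i, j). if i = j then d i else 0)) $$ (i, j) =
    (\<Sum>k<n. M $$ (i, k) * (if k = j then d k else 0))"
    using M i j by (simp add: scalar_prod_def atLeast0LessThan)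
  also have "\<dots> = (\<Sum>k<n. if k = j then M $$ (i, j) * d j else 0)"
    by (rule sum.cong) auto
  also have "\<dots> = M $$ (i, j) * d j" using j by simp
  finally show ?thesis .
qed

lemma bipartite_similar_neg:
  fixes A :: "real mat" and c :: "nat \<Rightarrow> bool"
  assumes A: "A \<in> carrier_mat n n"
    and col: "\<And>i j. i < n \<Longrightarrow> j < n \<Longrightarrow> A $$ (i, j) \<noteq> 0 \<Longrightarrow> c i \<noteq> c j"
  shows "similar_mat (- A) A"
proof -
  define d where "d i = (if c i then 1 else - 1 :: real)" for i
  define D where "D = mat n n (\<lambda>(i, j). if i = j then d i else 0)"
  have D: "D \<in> carrier_mat n n" unfolding D_def by simp
  have DD: "D * D = 1\<^sub>m n"
  proof (rule eq_matI)
    fix i j assume i: "i < dim_row (1\<^sub>m n)" and j: "j < dim_col (1\<^sub>m n)"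
    hence "i < n" "j < n" by auto
    then show "(D * D) $$ (i, j) = 1\<^sub>m n $$ (i, j)"
      unfolding D_def using diag_left_entry[OF D[unfolded D_def], of i j d] by (auto simp: d_def)
  qed (use D in auto)
  have DAD: "- A = D * A * D"
  proof (rule eq_matI)
    fix i j assume i: "i < dim_row (D * A * D)" and j: "j < dim_col (D * A * D)"
    hence ij: "i < n" "j < n" using D by auto
    have "(D * A * D) $$ (i, j) = d i * A $$ (i, j) * d j"
    proof -
      have DA: "D * A \<in> carrier_mat n n" using D A by simp
      have "(D * A * D) $$ (i, j) = (D * A) $$ (i, j) * d j"
        unfolding D_def[of] using diag_right_entry[OF DA[unfolded D_def] ij, of d] by (simp add: D_def)
      also have "(D * A) $$ (i, j) = d i * A $$ (i, j)"
        unfolding D_def by (rule diag_left_entry[OF A ij])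
      finally show ?thesis .
    qed
    also have "\<dots> = - A $$ (i, j)"
    proof (cases "A $$ (i, j) = 0")
      case False
      hence "c i \<noteq> c j" using col ij by simp
      then show ?thesis by (cases "c i") (auto simp: d_def)
    qed simp
    finally show "(- A) $$ (i, j) = (D * A * D) $$ (i, j)" using ij A by simp
  qed (use D A in auto)
  show ?thesis by (rule similar_matI[of _ _ D D n]) (use A D DD DAD in auto)
qed

lemma neg_similar_wit:
  fixes A B P Q :: "real mat"
  assumes sim: "similar_mat_wit A B P Q" and A: "A \<in> carrier_mat n n"
  shows "similar_mat (- A) (- B)"
proof -
  have dA: "dim_row A = n" using A by simp
  have B: "B \<in> carrier_mat n n" and P: "P \<in> carrier_mat n n" and Q: "Q \<in> carrier_mat n n"
    and PQ: "P * Q = 1\<^sub>m n" and QP: "Q * P = 1\<^sub>m n" and AE: "A = P * B * Q"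
    using sim unfolding similar_mat_wit_def Let_def dA by auto
  have "- A = P * (- B) * Q" using AE B P Q
    by (simp add: uminus_mult_right_mat uminus_mult_left_mat)
  then show ?thesis by (intro similar_matI[of _ _ P Q n]) (use A B P Q PQ QP in auto)
qed



lemma zero_count_factor:
  fixes ls :: "real list"
  shows "\<exists>q. (\<Prod>l\<leftarrow>ls. [:- l, 1:]) = monom 1 (length (filter (\<lambda>x. x = 0) ls)) * q \<and> poly q 0 \<noteq> 0"
proof (induction ls)
  case Nil
  show ?case by (rule exI[of _ 1]) (simp add: monom_0 one_pCons)
next
  case (Cons l ls)
  then obtain q where q: "(\<Prod>l\<leftarrow>ls. [:- l, 1:]) = monom 1 (length (filter (\<lambda>x. x = 0) ls)) * q"
    and q0: "poly q 0 \<noteq> 0" by blast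
  let ?z = "length (filter (\<lambda>x. x = 0) ls)"
  show ?case
  proof (cases "l = 0")
    case True
    have "(\<Prod>l\<leftarrow>l # ls. [:- l, 1:]) = [:0, 1:] * (monom 1 ?z * q)"
      using q True by (simp only: list.map prod_list.Cons) simp
    also have "\<dots> = monom 1 (Suc ?z) * q"
      by (simp only: x_as_monom mult.assoc[symmetric] mult_monom) simp
    finally have e: "(\<Prod>l\<leftarrow>l # ls. [:- l, 1:]) = monom 1 (Suc ?z) * q" .
    have "length (filter (\<lambda>x. x = 0) (l # ls)) = Suc ?z" using True by simp
    then show ?thesis using e q0 by (intro exI[of _ q]) simp
  next
    case False
    have "(\<Prod>l\<leftarrow>l # ls. [:- l, 1:]) = [:- l, 1:] * (monom 1 ?z * q)"
      using q by (simp only: list.map prod_list.Cons)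
    also have "\<dots> = monom 1 ?z * ([:- l, 1:] * q)" by (simp only: mult.left_commute)
    finally have e: "(\<Prod>l\<leftarrow>l # ls. [:- l, 1:]) = monom 1 ?z * ([:- l, 1:] * q)" .
    have "poly ([:- l, 1:] * q) 0 \<noteq> 0" using False q0 by simp
    moreover have "length (filter (\<lambda>x. x = 0) (l # ls)) = ?z" using False by simp
    ultimately show ?thesis using e by (intro exI[of _ "[:- l, 1:] * q"]) simp
  qed
qed

lemma coeff_zero_count:
  fixes ls :: "real list"
  shows "coeff (\<Prod>l\<leftarrow>ls. [:- l, 1:]) (length (filter (\<lambda>x. x = 0) ls)) \<noteq> 0"
proof -
  obtain q where q: "(\<Prod>l\<leftarrow>ls. [:- l, 1:]) = monom 1 (length (filter (\<lambda>x. x = 0) ls)) * q"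
    and q0: "poly q 0 \<noteq> 0" using zero_count_factor by blast
  show ?thesis unfolding q Polynomial.coeff_monom_mult using q0 by (simp add: poly_0_coeff_0)
qed

lemma prod_const_poly:
  fixes f :: "nat \<Rightarrow> real"
  shows "finite S \<Longrightarrow> (\<Prod>i\<in>S. [:f i:]) = [:\<Prod>i\<in>S. f i:]"
  by (induction rule: finite_induct) auto

lemma leibniz_perm:
  fixes A :: "real mat"
  assumes A: "A \<in> carrier_mat n n" and d0: "\<And>i. i < n \<Longrightarrow> A $$ (i, i) = 0"
    and cz: "coeff (char_poly A) z \<noteq> 0"
  shows "\<exists>p. p permutes {0..<n} \<and> card {i\<in>{0..<n}. p i \<noteq> i} = n - z \<and> (\<forall>i<n. p i \<noteq> i \<longrightarrow> A $$ (i, p i) \<noteq> 0)"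
proof -
  let ?M = "char_poly_matrix A"
  have M: "?M \<in> carrier_mat n n" using A by simp
  have ent: "?M $$ (i, j) = (if i = j then [:0, 1:] else [:- A $$ (i, j):])" if "i < n" "j < n" for i j
    using A d0 that by (auto simp: char_poly_matrix_def)
  let ?S = "{p. p permutes {0..<n}}"
  let ?t = "\<lambda>p. signof p * (\<Prod>i = 0..<n. ?M $$ (i, p i))"
  have "char_poly A = (\<Sum>p\<in>?S. ?t p)"
    unfolding char_poly_def by (rule det_def'[OF M])
  hence eqc: "coeff (char_poly A) z = (\<Sum>p\<in>?S. coeff (?t p) z)" by (simp only: coeff_sum)
  have sne: "(\<Sum>p\<in>?S. coeff (?t p) z) \<noteq> 0" using cz unfolding eqc .
  have "\<exists>p\<in>?S. coeff (?t p) z \<noteq> 0"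
  proof (rule ccontr)
    assume "\<not> ?thesis"
    hence "\<forall>p\<in>?S. coeff (?t p) z = 0" by blast
    hence "(\<Sum>p\<in>?S. coeff (?t p) z) = 0" by (rule sum.neutral)
    thus False using sne by (simp only:)
  qed
  then obtain p where "p \<in> ?S" and cp: "coeff (?t p) z \<noteq> 0" by blast
  hence p: "p permutes {0..<n}" by simp
  have pin: "p i < n" if "i < n" for i using permutes_in_image[OF p] that by simp
  define F where "F = {i\<in>{0..<n}. p i = i}"
  define N where "N = {i\<in>{0..<n}. p i \<noteq> i}"
  define C where "C = (\<Prod>i\<in>N. - A $$ (i, p i))"
  have F1: "{0..<n} \<inter> {i. i = p i} = F" unfolding F_def by auto
  have N1: "{0..<n} \<inter> - {i. i = p i} = N" unfolding N_def by auto
  have finN: "finite N" unfolding N_def by simp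
  have entp: "?M $$ (i, p i) = (if i = p i then [:0, 1:] else [:- A $$ (i, p i):])" if "i < n" for i
    using ent[OF that pin[OF that]] .
  have "(\<Prod>i = 0..<n. ?M $$ (i, p i)) = (\<Prod>i = 0..<n. if i = p i then [:0, 1:] else [:- A $$ (i, p i):])"
    by (intro prod.cong refl, rule entp) simp
  also have "\<dots> = (\<Prod>i\<in>F. [:0, 1:]) * (\<Prod>i\<in>N. [:- A $$ (i, p i):])"
    unfolding prod.If_cases[OF finite_atLeastLessThan] F1 N1 ..
  also have "\<dots> = [:0, 1:] ^ card F * [:C:]"
    unfolding C_def by (simp add: prod_const_poly[OF finN])
  also have "\<dots> = monom C (card F)" by (simp add: monom_altdef)
  finally have prod: "(\<Prod>i = 0..<n. ?M $$ (i, p i)) = monom C (card F)" .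
  have "coeff (monom C (card F)) z \<noteq> 0"
  proof (cases "evenperm p")
    case True
    then show ?thesis using cp prod by (simp add: sign_def)
  next
    case False
    then show ?thesis using cp prod by (simp add: sign_def)
  qed
  hence Fz: "card F = z" and C0: "C \<noteq> 0" by (auto simp: coeff_monom split: if_splits)
  have nz: "\<forall>i<n. p i \<noteq> i \<longrightarrow> A $$ (i, p i) \<noteq> 0"
  proof (intro allI impI)
    fix i assume "i < n" "p i \<noteq> i"
    hence "i \<in> N" unfolding N_def by simp
    show "A $$ (i, p i) \<noteq> 0"
    proof
      assume "A $$ (i, p i) = 0"
      hence ex: "\<exists>a\<in>N. - A $$ (a, p a) = 0" using \<open>i \<in> N\<close> by auto
      have "C = 0" unfolding C_def prod_zero_iff[OF finN] by (rule ex)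
      thus False using C0 by simp
    qed
  qed
  have "N = {0..<n} - F" unfolding N_def F_def by auto
  moreover have "F \<subseteq> {0..<n}" "finite F" unfolding F_def by auto
  ultimately have "card N = n - card F" using card_Diff_subset[of F "{0..<n}"] by simp
  then show ?thesis using p Fz nz unfolding N_def by blast
qed

lemma perm_matching:
  fixes c :: "nat \<Rightarrow> bool"
  assumes finE: "finite E" and p: "p permutes {0..<n}"
    and edge: "\<And>i. i < n \<Longrightarrow> p i \<noteq> i \<Longrightarrow> {i, p i} \<in> E"
    and col: "\<And>a b. {a, b} \<in> E \<Longrightarrow> c a \<noteq> c b"
  shows "card {i\<in>{0..<n}. p i \<noteq> i} \<le> 2 * matching_number E"
proof -
  have injp: "inj p" using p by (rule permutes_inj)
  have finM: "finite {M. is_matching E M}"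
    by (rule finite_subset[of _ "Pow E"]) (auto simp: is_matching_def finE)
  have side: "card {i\<in>{0..<n}. p i \<noteq> i \<and> c i = b} \<le> matching_number E" for b
  proof -
    define X where "X = {i\<in>{0..<n}. p i \<noteq> i \<and> c i = b}"
    define M where "M = (\<lambda>i. {i, p i}) ` X"
    have XE: "{i, p i} \<in> E" if "i \<in> X" for i using that edge unfolding X_def by simp
    have cX: "c i = b" if "i \<in> X" for i using that unfolding X_def by simp
    have cp: "c (p i) \<noteq> b" if "i \<in> X" for i using col[OF XE[OF that]] cX[OF that] by simp
    have inj: "inj_on (\<lambda>i. {i, p i}) X"
    proof (rule inj_onI)
      fix i j assume i: "i \<in> X" and j: "j \<in> X" and e: "{i, p i} = {j, p j}"
      hence "i = j \<or> (i = p j \<and> p i = j)" by (metis doubleton_eq_iff)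
      then show "i = j"
      proof
        assume "i = p j \<and> p i = j"
        hence "c i = c (p j)" by simp
        then show "i = j" using cX[OF i] cp[OF j] by simp
      qed
    qed
    have "is_matching E M"
      unfolding is_matching_def
    proof (intro conjI ballI impI)
      show "M \<subseteq> E" unfolding M_def using XE by blast
      fix e f assume e: "e \<in> M" and f: "f \<in> M" and ef: "e \<noteq> f"
      obtain i where i: "i \<in> X" and ei: "e = {i, p i}" using e unfolding M_def by blast
      obtain j where j: "j \<in> X" and fj: "f = {j, p j}" using f unfolding M_def by blast
      have ij: "i \<noteq> j" using ef ei fj by blast
      have "p i \<noteq> p j" using ij injp by (meson injD)
      moreover have "i \<noteq> p j" using cX[OF i] cp[OF j] by metis
      moreover have "p i \<noteq> j" using cX[OF j] cp[OF i] by metis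
      ultimately show "e \<inter> f = {}" using ij ei fj by auto
    qed
    hence "card M \<in> card ` {M. is_matching E M}" by blast
    hence "card M \<le> matching_number E" unfolding matching_number_def
      using finM by (intro Max_ge) auto
    moreover have "card M = card X" unfolding M_def by (rule card_image[OF inj])
    ultimately show ?thesis unfolding X_def by simp
  qed
  have eqU: "{i\<in>{0..<n}. p i \<noteq> i} = {i\<in>{0..<n}. p i \<noteq> i \<and> c i = True} \<union> {i\<in>{0..<n}. p i \<noteq> i \<and> c i = False}"
    by auto
  have "card {i\<in>{0..<n}. p i \<noteq> i} \<le> card {i\<in>{0..<n}. p i \<noteq> i \<and> c i = True} + card {i\<in>{0..<n}. p i \<noteq> i \<and> c i = False}"
    unfolding eqU by (rule card_Un_le)
  also have "\<dots> \<le> 2 * matching_number E" using side[of True] side[of False] by simp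
  finally show ?thesis .
qed

lemma card_nbrs:
  assumes simple: "simple_graph n E" and i: "i < n"
  shows "card {j. j < n \<and> {i, j} \<in> E} = card {e\<in>E. i \<in> e}"
proof (rule bij_betw_same_card[of "\<lambda>j. {i, j}"])
  show "bij_betw (\<lambda>j. {i, j}) {j. j < n \<and> {i, j} \<in> E} {e\<in>E. i \<in> e}"
    unfolding bij_betw_def
  proof
    show "inj_on (\<lambda>j. {i, j}) {j. j < n \<and> {i, j} \<in> E}"
    proof (rule inj_onI)
      fix j j' assume "{i, j} = {i, j'}"
      then show "j = j'" by (metis doubleton_eq_iff)
    qed
    show "(\<lambda>j. {i, j}) ` {j. j < n \<and> {i, j} \<in> E} = {e\<in>E. i \<in> e}"
    proof
      show "(\<lambda>j. {i, j}) ` {j. j < n \<and> {i, j} \<in> E} \<subseteq> {e\<in>E. i \<in> e}" by auto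
      show "{e\<in>E. i \<in> e} \<subseteq> (\<lambda>j. {i, j}) ` {j. j < n \<and> {i, j} \<in> E}"
      proof
        fix e assume e: "e \<in> {e\<in>E. i \<in> e}"
        then obtain a b where ab: "a < n" "b < n" "a \<noteq> b" "e = {a, b}"
          using simple unfolding simple_graph_def by blast
        have "i = a \<or> i = b" using e ab(4) by simp
        then show "e \<in> (\<lambda>j. {i, j}) ` {j. j < n \<and> {i, j} \<in> E}"
        proof
          assume "i = a"
          then show ?thesis using ab e by (intro image_eqI[of _ _ b]) auto
        next
          assume "i = b"
          hence "e = {i, a}" using ab(4) by (simp add: insert_commute)
          then show ?thesis using ab e by (intro image_eqI[of _ _ a]) auto
        qed
      qed
    qed
  qed
qed

lemma adj_trace:
  assumes simple: "simple_graph n E" and finE: "finite E"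
  shows "mtr (adj_matrix n E * adj_matrix n E) = real (2 * card E)"
proof -
  let ?A = "adj_matrix n E"
  have A: "?A \<in> carrier_mat n n" unfolding adj_matrix_def by simp
  have Aent: "?A $$ (i, j) = (if {i, j} \<in> E then 1 else 0)" if "i < n" "j < n" for i j
    unfolding adj_matrix_def using that by simp
  have "mtr (?A * ?A) = (\<Sum>i<n. (?A * ?A) $$ (i, i))" unfolding mtr_def using A by simp
  also have "\<dots> = (\<Sum>i<n. \<Sum>j<n. ?A $$ (i, j) * ?A $$ (j, i))"
    by (intro sum.cong refl, rule mult_diag_entry[OF A A]) simp
  also have "\<dots> = (\<Sum>i<n. real (card {e\<in>E. i \<in> e}))"
  proof (rule sum.cong[OF refl])
    fix i assume i: "i \<in> {..<n}"
    have "(\<Sum>j<n. ?A $$ (i, j) * ?A $$ (j, i)) = (\<Sum>j<n. if {i, j} \<in> E then 1 else 0)"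
      by (rule sum.cong[OF refl]) (use i in \<open>simp add: Aent insert_commute\<close>)
    also have "\<dots> = (\<Sum>j\<in>{j\<in>{..<n}. {i, j} \<in> E}. 1)"
      by (rule sum.inter_filter[symmetric]) simp
    also have "\<dots> = real (card {j. j < n \<and> {i, j} \<in> E})" by simp
    also have "card {j. j < n \<and> {i, j} \<in> E} = card {e\<in>E. i \<in> e}"
      using card_nbrs[OF simple] i by simp
    finally show "(\<Sum>j<n. ?A $$ (i, j) * ?A $$ (j, i)) = real (card {e\<in>E. i \<in> e})" .
  qed
  also have "\<dots> = real (\<Sum>i<n. card {e\<in>E. i \<in> e})" by simp
  also have "(\<Sum>i<n. card {e\<in>E. i \<in> e}) = 2 * card E"
  proof (rule degree_sum)
    show "finite {..<n}" by simp
    show "finite E" by (rule finE)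
    show "\<forall>e\<in>E. \<exists>a b. a \<in> {..<n} \<and> b \<in> {..<n} \<and> a \<noteq> b \<and> e = {a, b}"
      using simple unfolding simple_graph_def by auto
  qed
  finally show ?thesis .
qed

theorem corollary4p1:
  fixes n k :: nat and E :: "nat set set"
  assumes "is_tree n E"
    and "1 \<le> k" and "k \<le> n"
  shows "S_k k (adj_matrix n E) \<le>
    (if k \<le> matching_number E then sqrt (real k * (real n - 1))
     else if k \<le> n - matching_number E then sqrt (real (matching_number E) * (real n - 1))
     else sqrt (real (n - k) * (real n - 1)))"
proof -
  let ?A = "adj_matrix n E"
  let ?b = "matching_number E"
  have n1: "n \<ge> 1" and simple: "simple_graph n E" and cE: "card E = n - 1"
    using assms(1) unfolding is_tree_def by blast+
  have A: "?A \<in> carrier_mat n n" unfolding adj_matrix_def by simp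
  have Aent: "?A $$ (i, j) = (if {i, j} \<in> E then 1 else 0)" if "i < n" "j < n" for i j
    unfolding adj_matrix_def using that by simp
  have nosing: "{a} \<notin> E" for a
  proof
    assume "{a} \<in> E"
    then obtain x y where xy: "x \<noteq> y" "{a} = {x, y}" using simple unfolding simple_graph_def by blast
    have "x \<in> {a}" "y \<in> {a}" using xy(2) by simp_all
    then show False using xy(1) by simp
  qed
  have d0: "?A $$ (i, i) = 0" if "i < n" for i using Aent[OF that that] nosing by simp
  have sym: "?A $$ (i, j) = ?A $$ (j, i)" if "i < n" "j < n" for i j
    using Aent[OF that] Aent[OF that(2,1)] by (simp add: insert_commute)
  have EPow: "E \<subseteq> Pow {..<n}"
  proof
    fix e assume "e \<in> E"
    then obtain a b where "a < n" "b < n" "e = {a, b}" using simple unfolding simple_graph_def by blast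
    then show "e \<in> Pow {..<n}" by simp
  qed
  have finE: "finite E" using finite_subset[OF EPow] by simp
  obtain ls0 where ls0: "char_poly ?A = (\<Prod>l\<leftarrow>ls0. [:- l, 1:])"
    using real_sym_split[OF A sym] by blast
  define ls1 where "ls1 = rev (sort ls0)"
  have m1: "mset ls1 = mset ls0" unfolding ls1_def by simp
  have pm: "\<And>zs. (\<Prod>l\<leftarrow>zs. [:- l, 1:]) = prod_mset (image_mset (\<lambda>l. [:- l, 1:]) (mset zs))"
    by (metis mset_map prod_mset_prod_list)
  have cp1: "char_poly ?A = (\<Prod>l\<leftarrow>ls1. [:- l, 1:])" unfolding ls0 pm[of ls0] pm[of ls1] m1 ..
  have "degree (char_poly ?A) = n" using degree_monic_char_poly[OF A] by simp
  hence len1: "length ls1 = n" unfolding cp1 degree_linear_factors .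
  have sorted1: "sorted_wrt (\<ge>) ls1" unfolding ls1_def by (simp add: sorted_wrt_rev)
  have ex: "\<exists>ls. length ls = dim_row ?A \<and> sorted_wrt (\<ge>) ls \<and> char_poly ?A = (\<Prod>l\<leftarrow>ls. [:- l, 1:])"
    using len1 sorted1 cp1 A by auto
  define ls where "ls = eigenvalues_desc ?A"
  have lsprop: "length ls = dim_row ?A \<and> sorted_wrt (\<ge>) ls \<and> char_poly ?A = (\<Prod>l\<leftarrow>ls. [:- l, 1:])"
    unfolding ls_def eigenvalues_desc_def by (rule someI_ex[OF ex])
  have len: "length ls = n" using lsprop A by simp
  have sorted: "sorted_wrt (\<ge>) ls" using lsprop by blast
  have cp: "char_poly ?A = (\<Prod>l\<leftarrow>ls. [:- l, 1:])" using lsprop by blast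
  obtain B P Q where sd: "schur_decomposition ?A ls = (B, P, Q)" by (metis prod_cases3)
  from schur_decomposition[OF A cp sd]
  have sim: "similar_mat_wit ?A B P Q" and ut: "upper_triangular B" and dB: "diag_mat B = ls" by auto
  have B: "B \<in> carrier_mat n n" using sim A unfolding similar_mat_wit_def Let_def by auto
  have "sum_list (map (\<lambda>x. x^2) ls) = mtr (B * B)" using mtr_upper_sq[OF B ut] dB by simp
  also have "\<dots> = mtr (?A * ?A)" using mtr_similar_sq[OF sim A] by simp
  also have "\<dots> = real (2 * card E)" by (rule adj_trace[OF simple finE])
  also have "\<dots> = 2 * (real n - 1)" using cE n1 by simp
  finally have sq: "sum_list (map (\<lambda>x. x^2) ls) = 2 * (real n - 1)" .
  obtain c :: "nat \<Rightarrow> bool" where col: "\<forall>a b. {a, b} \<in> E \<longrightarrow> c a \<noteq> c b"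
    using tree_coloring[OF assms(1)] by blast
  have colA: "c i \<noteq> c j" if "i < n" "j < n" "?A $$ (i, j) \<noteq> 0" for i j
  proof -
    have "{i, j} \<in> E" using that Aent[OF that(1,2)] by (simp split: if_splits)
    then show ?thesis using col by blast
  qed
  have "char_poly (- ?A) = char_poly ?A"
    by (rule char_poly_similar[OF bipartite_similar_neg[OF A colA]])
  moreover have "char_poly (- ?A) = char_poly (- B)"
    by (rule char_poly_similar[OF neg_similar_wit[OF sim A]])
  moreover have "char_poly (- B) = (\<Prod>l\<leftarrow>diag_mat (- B). [:- l, 1:])"
  proof (rule char_poly_upper_triangular)
    show "- B \<in> carrier_mat n n" using B by simp
    show "upper_triangular (- B)" using ut B unfolding upper_triangular_def by auto
  qed
  moreover have "diag_mat (- B) = map uminus ls"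
    using dB B unfolding diag_mat_def by auto
  ultimately have "(\<Prod>l\<leftarrow>ls. [:- l, 1:]) = (\<Prod>l\<leftarrow>map uminus ls. [:- l, 1:])"
    using cp by simp
  hence symm: "mset (map uminus ls) = mset ls" using prod_linear_mset by metis
  let ?z = "length (filter (\<lambda>x. x = 0) ls)"
  have "coeff (char_poly ?A) ?z \<noteq> 0" unfolding cp by (rule coeff_zero_count)
  from leibniz_perm[OF A d0 this] obtain p where p: "p permutes {0..<n}"
    and cardN: "card {i\<in>{0..<n}. p i \<noteq> i} = n - ?z"
    and pA: "\<forall>i<n. p i \<noteq> i \<longrightarrow> ?A $$ (i, p i) \<noteq> 0" by blast
  have pin: "p i < n" if "i < n" for i using permutes_in_image[OF p] that by simp
  have edge: "{i, p i} \<in> E" if "i < n" "p i \<noteq> i" for i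
    using pA that Aent[OF that(1) pin[OF that(1)]] by (simp split: if_splits)
  have "n - ?z \<le> 2 * ?b"
    using perm_matching[OF finE p edge] col cardN by auto
  moreover have "length (filter (\<lambda>x. x \<noteq> 0) ls) = n - ?z"
    using sum_length_filter_compl[of "\<lambda>x. x = 0" ls] len by simp
  ultimately have nz: "length (filter (\<lambda>x. x \<noteq> 0) ls) \<le> 2 * ?b" by simp
  have Sk: "S_k j ?A = sum_list (take j ls)" for j unfolding S_k_def ls_def ..
  have bound: "S_k j ?A \<le> sqrt (real (min j ?b) * (real n - 1))" for j
    unfolding Sk by (rule list_main[OF symm sq nz])
  have flip: "S_k k ?A = S_k (n - k) ?A"
    unfolding Sk using list_sym_take[OF sorted symm, of k] len assms(3) by simp
  have n0: "0 \<le> real n - 1" using n1 by simp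
  show ?thesis
  proof (cases "k \<le> ?b")
    case True
    then show ?thesis using bound[of k] by simp
  next
    case False
    show ?thesis
    proof (cases "k \<le> n - ?b")
      case True
      have "min k ?b = ?b" using False by simp
      then show ?thesis using bound[of k] False True by simp
    next
      case False2: False
      have "S_k k ?A \<le> sqrt (real (min (n - k) ?b) * (real n - 1))" using flip bound[of "n - k"] by simp
      also have "\<dots> \<le> sqrt (real (n - k) * (real n - 1))"
        by (rule real_sqrt_le_mono, rule mult_right_mono) (use n0 in simp_all)
      finally show ?thesis using False False2 by simp
    qed
  qed
qed

end
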